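(* Let $\psi,\varphi$ be metric formulas and $n\in\mathbb{N}$ with $n>0$. Then, with respect to strict timed traces: $$\psi\,\mathsf{U}_{[0,n]}\,\varphi\equiv\varphi\vee\Big(\psi\wedge\bigvee_{i=1}^{n}\circ_{[i,i]}\big(\psi\,\mathsf{U}_{[0,n-i]}\,\varphi\big)\Big),\qquad \psi\,\mathsf{R}_{[0,n]}\,\varphi\equiv\varphi\wedge\Big(\psi\vee\bigwedge_{i=1}^{n}\widehat{\circ}_{[i,i]}\big(\psi\,\mathsf{R}_{[0,n-i]}\,\varphi\big)\Big),$$ and the same holds for the dual past operators, i.e. the equivalences obtained by replacing $\mathsf{U},\mathsf{R},\circ,\widehat{\circ}$ by $\mathsf{S},\mathsf{T},\bullet,\widehat{\bullet}$ respectively.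
   Context: Write $[m,n)=\{i\in\mathbb{N}\mid m\le i<n\}$, $[m,n]=\{i\in\mathbb{N}\mid m\le i\le n\}$, $(m,n]=\{i\in\mathbb{N}\mid m<i\le n\}$. Metric formulas over a set of atoms $\mathcal{A}$: $\varphi::=p\mid\bot\mid\varphi_1\wedge\varphi_2\mid\varphi_1\vee\varphi_2\mid\varphi_1\to\varphi_2\mid\bullet_I\varphi\mid\varphi_1\mathsf{S}_I\varphi_2\mid\varphi_1\mathsf{T}_I\varphi_2\mid\circ_I\varphi\mid\varphi_1\mathsf{U}_I\varphi_2\mid\varphi_1\mathsf{R}_I\varphi_2$, $p\in\mathcal{A}$, $I=[m,n)$, $m\in\mathbb{N}$, $n\in\mathbb{N}\cup\{\omega\}$; a subscript $[m,n]$ with $n\in\mathbb{N}$ abbreviates $[m,n+1)$. Derived: $\neg\varphi:=\varphi\to\bot$, $\top:=\neg\bot$, $\widehat{\bullet}_I\varphi:=\bullet_I\varphi\vee\neg\bullet_I\top$, $\widehat{\circ}_I\varphi:=\circ_I\varphi\vee\neg\circ_I\top$. A timed HT-trace of length $\lambda\in\mathbb{N}\cup\{\omega\}$ is $\mathbf{M}=(\langle\mathbf{H},\mathbf{T}\rangle,\tau)$ with $H_i\subseteq T_i\subseteq\mathcal{A}$ for $i\in[0,\lambda)$, $\tau:[0,\lambda)\to\mathbb{N}$, $\tau(0)=0$, $\tau(i)\le\tau(i+1)$; strict if $\tau(i)<\tau(i+1)$ whenever $i+1<\lambda$. Satisfaction at $k\in[0,\lambda)$: $\bot$ never; $p$ iff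 $p\in H_k$; $\wedge,\vee$ usual; $\varphi\to\psi$ iff for both $\mathbf{M}'=\mathbf{M}$ and $\mathbf{M}'=(\langle\mathbf{T},\mathbf{T}\rangle,\tau)$, $\mathbf{M}',k\not\models\varphi$ or $\mathbf{M}',k\models\psi$; $\bullet_I\varphi$ iff $k>0$, $\mathbf{M},k-1\models\varphi$, $\tau(k)-\tau(k-1)\in I$; $\varphi\mathsf{S}_I\psi$ iff for some $j\in[0,k]$ with $\tau(k)-\tau(j)\in I$, $\mathbf{M},j\models\psi$ and $\mathbf{M},i\models\varphi$ for all $i\in(j,k]$; $\varphi\mathsf{T}_I\psi$ iff for all $j\in[0,k]$ with $\tau(k)-\tau(j)\in I$, $\mathbf{M},j\models\psi$ or $\mathbf{M},i\models\varphi$ for some $i\in(j,k]$; $\circ_I\varphi$ iff $k+1<\lambda$, $\mathbf{M},k+1\models\varphi$, $\tau(k+1)-\tau(k)\in I$; $\varphi\mathsf{U}_I\psi$ iff for some $j\in[k,\lambda)$ with $\tau(j)-\tau(k)\in I$, $\mathbf{M},j\models\psi$ and $\mathbf{M},i\models\varphi$ for all $i\in[k,j)$; $\varphi\mathsf{R}_I\psi$ iff for all $j\in[k,\lambda)$ with $\tau(j)-\tau(k)\in I$, $\mathbf{M},j\models\psi$ or $\mathbf{M},i\models\varphi$ for some $i\in[k,j)$. $\alpha\equiv\beta$ (w.r.t. strict traces) means: for every strict timed HT-trace $\mathbf{M}$ of any length $\lambda$ and every $k\in[0,\lambda)$, $\mathbf{M},k\models\alpha$ iff $\mathbf{M},k\models\beta$.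 *)

theory Defs
  imports Main "HOL-Library.Extended_Nat"
begin

text \<open>Intervals [m,n) with m a natural number and n a natural number or omega (= infinity).\<close>
type_synonym interval = "nat \<times> enat"

definition in_int :: "nat \<Rightarrow> interval \<Rightarrow> bool" where
  "in_int d I \<longleftrightarrow> fst I \<le> d \<and> enat d < snd I"

definition cint :: "nat \<Rightarrow> nat \<Rightarrow> interval" where
  "cint m n = (m, enat (n + 1))"

datatype 'a mformula =
    Atom 'a
  | Bot
  | And "'a mformula" "'a mformula"
  | Or "'a mformula" "'a mformula"
  | Imp "'a mformula" "'a mformula"
  | Prev interval "'a mformula"
  | Since interval "'a mformula" "'a mformula"
  | Trigger interval "'a mformula" "'a mformula"
  | Next interval "'a mformula"
  | Until interval "'a mformula" "'a mformula"
  | Release interval "'a mformula" "'a mformula"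

definition Neg :: "'a mformula \<Rightarrow> 'a mformula" where
  "Neg f = Imp f Bot"

definition Top :: "'a mformula" where
  "Top = Neg Bot"

definition WPrev :: "interval \<Rightarrow> 'a mformula \<Rightarrow> 'a mformula" where
  "WPrev I f = Or (Prev I f) (Neg (Prev I Top))"

definition WNext :: "interval \<Rightarrow> 'a mformula \<Rightarrow> 'a mformula" where
  "WNext I f = Or (Next I f) (Neg (Next I Top))"

fun BigOr :: "'a mformula list \<Rightarrow> 'a mformula" where
  "BigOr [] = Bot"
| "BigOr [f] = f"
| "BigOr (f # fs) = Or f (BigOr fs)"

fun BigAnd :: "'a mformula list \<Rightarrow> 'a mformula" where
  "BigAnd [] = Top"
| "BigAnd [f] = f"
| "BigAnd (f # fs) = And f (BigAnd fs)"

text \<open>Satisfaction in a timed HT-trace ((H,T),tau) of length lam at position k.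
  The "here" component H is a parameter so that implication can also be evaluated
  in (T,T).\<close>
primrec sat :: "(nat \<Rightarrow> 'a set) \<Rightarrow> (nat \<Rightarrow> 'a set) \<Rightarrow> (nat \<Rightarrow> nat) \<Rightarrow> enat \<Rightarrow> nat \<Rightarrow> 'a mformula \<Rightarrow> bool" where
  "sat H T tau lam k (Atom p) = (p \<in> H k)"
| "sat H T tau lam k Bot = False"
| "sat H T tau lam k (And f g) = (sat H T tau lam k f \<and> sat H T tau lam k g)"
| "sat H T tau lam k (Or f g) = (sat H T tau lam k f \<or> sat H T tau lam k g)"
| "sat H T tau lam k (Imp f g) =
     ((\<not> sat H T tau lam k f \<or> sat H T tau lam k g) \<and>
      (\<not> sat T T tau lam k f \<or> sat T T tau lam k g))"
| "sat H T tau lam k (Prev I f) =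
     (k > 0 \<and> sat H T tau lam (k - 1) f \<and> in_int (tau k - tau (k - 1)) I)"
| "sat H T tau lam k (Since I f g) =
     (\<exists>j\<le>k. in_int (tau k - tau j) I \<and> sat H T tau lam j g \<and>
        (\<forall>i. j < i \<and> i \<le> k \<longrightarrow> sat H T tau lam i f))"
| "sat H T tau lam k (Trigger I f g) =
     (\<forall>j\<le>k. in_int (tau k - tau j) I \<longrightarrow> sat H T tau lam j g \<or>
        (\<exists>i. j < i \<and> i \<le> k \<and> sat H T tau lam i f))"
| "sat H T tau lam k (Next I f) =
     (enat (k + 1) < lam \<and> sat H T tau lam (k + 1) f \<and> in_int (tau (k + 1) - tau k) I)"
| "sat H T tau lam k (Until I f g) =
     (\<exists>j. k \<le> j \<and> enat j < lam \<and> in_int (tau j - tau k) I \<and> sat H T tau lam j g \<and>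
        (\<forall>i. k \<le> i \<and> i < j \<longrightarrow> sat H T tau lam i f))"
| "sat H T tau lam k (Release I f g) =
     (\<forall>j. k \<le> j \<and> enat j < lam \<and> in_int (tau j - tau k) I \<longrightarrow> sat H T tau lam j g \<or>
        (\<exists>i. k \<le> i \<and> i < j \<and> sat H T tau lam i f))"

text \<open>Strict timed HT-trace of length lam (values at positions \<ge> lam are irrelevant).\<close>
definition strict_trace :: "(nat \<Rightarrow> 'a set) \<Rightarrow> (nat \<Rightarrow> 'a set) \<Rightarrow> (nat \<Rightarrow> nat) \<Rightarrow> enat \<Rightarrow> bool" where
  "strict_trace H T tau lam \<longleftrightarrow>
     (\<forall>i. enat i < lam \<longrightarrow> H i \<subseteq> T i) \<and> tau 0 = 0 \<and>
     (\<forall>i. enat (i + 1) < lam \<longrightarrow> tau i \<le> tau (i + 1)) \<and>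
     (\<forall>i. enat (i + 1) < lam \<longrightarrow> tau i < tau (i + 1))"

definition equiv_strict :: "'a mformula \<Rightarrow> 'a mformula \<Rightarrow> bool" where
  "equiv_strict f g \<longleftrightarrow>
     (\<forall>H T tau lam k. strict_trace H T tau lam \<longrightarrow> enat k < lam \<longrightarrow>
        (sat H T tau lam k f \<longleftrightarrow> sat H T tau lam k g))"

end

theory Submission
  imports Defs
begin

lemma in_cint[simp]: "in_int d (cint a b) \<longleftrightarrow> a \<le> d \<and> d \<le> b"
  by (auto simp: in_int_def cint_def)

lemma sat_Top[simp]: "sat H T tau lam k Top"
  by (simp add: Top_def Neg_def)

lemma sat_BigOr: "sat H T tau lam k (BigOr fs) \<longleftrightarrow> (\<exists>f\<in>set fs. sat H T tau lam k f)"
  by (induction fs rule: BigOr.induct) auto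

lemma sat_BigAnd: "sat H T tau lam k (BigAnd fs) \<longleftrightarrow> (\<forall>f\<in>set fs. sat H T tau lam k f)"
  by (induction fs rule: BigAnd.induct) auto

lemma sat_WNext: "sat H T tau lam k (WNext I f) \<longleftrightarrow>
   (enat (k + 1) < lam \<and> in_int (tau (k + 1) - tau k) I \<longrightarrow> sat H T tau lam (k + 1) f)"
  by (auto simp: WNext_def Neg_def)

lemma sat_WPrev: "sat H T tau lam k (WPrev I f) \<longleftrightarrow>
   (k > 0 \<and> in_int (tau k - tau (k - 1)) I \<longrightarrow> sat H T tau lam (k - 1) f)"
  by (auto simp: WPrev_def Neg_def)

lemma mono_tau:
  assumes "strict_trace H T tau lam" "i \<le> j" "enat j < lam"
  shows "tau i \<le> tau j"
  using assms(2,3)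
proof (induction j)
  case 0 then show ?case by simp
next
  case (Suc j)
  have "enat j < lam" using Suc.prems(2) by (meson Suc_ile_eq less_imp_le order_le_less_trans enat_ord_simps(2) lessI)
  have "tau j < tau (Suc j)" using assms(1) Suc.prems(2) by (simp add: strict_trace_def)
  then show ?case using Suc \<open>enat j < lam\<close> by (cases "i = Suc j") auto
qed

lemma setmap: "(\<exists>f\<in>set (map g [1..<n+1]). P f) \<longleftrightarrow> (\<exists>i. 1 \<le> i \<and> i \<le> n \<and> P (g i))"
  by auto

lemma setmap2: "(\<forall>f\<in>set (map g [1..<n+1]). P f) \<longleftrightarrow> (\<forall>i. 1 \<le> i \<and> i \<le> n \<longrightarrow> P (g i))"
  by auto



lemma until_eq:
  assumes st: "strict_trace H T tau lam" and kl: "enat k < lam"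
  shows "sat H T tau lam k (Until (cint 0 n) psi phi) \<longleftrightarrow>
    sat H T tau lam k phi \<or> (sat H T tau lam k psi \<and> (\<exists>i. 1 \<le> i \<and> i \<le> n \<and>
      sat H T tau lam k (Next (cint i i) (Until (cint 0 (n - i)) psi phi))))"
proof
  assume "sat H T tau lam k (Until (cint 0 n) psi phi)"
  then obtain j where j: "k \<le> j" "enat j < lam" "tau j - tau k \<le> n" "sat H T tau lam j phi"
    "\<forall>i. k \<le> i \<and> i < j \<longrightarrow> sat H T tau lam i psi" by auto
  show "sat H T tau lam k phi \<or> (sat H T tau lam k psi \<and> (\<exists>i. 1 \<le> i \<and> i \<le> n \<and>
      sat H T tau lam k (Next (cint i i) (Until (cint 0 (n - i)) psi phi))))"
  proof (cases "j = k")
    case True then show ?thesis using j by simp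
  next
    case False
    hence kj: "k + 1 \<le> j" using j by simp
    hence k1: "enat (k+1) < lam" using j(2) by (meson enat_ord_simps(1) le_less_trans)
    have lt: "tau k < tau (k+1)" using st k1 by (simp add: strict_trace_def)
    have m1: "tau (k+1) \<le> tau j" using mono_tau[OF st kj j(2)] .
    have m2: "tau k \<le> tau j" using mono_tau[OF st j(1) j(2)] .
    define d where "d = tau (k+1) - tau k"
    have "sat H T tau lam (k+1) (Until (cint 0 (n - d)) psi phi)"
      using j kj lt m1 m2 by (auto simp: d_def intro!: exI[of _ j])
    moreover have "1 \<le> d" "d \<le> n" using lt m1 m2 j(3) by (auto simp: d_def)
    ultimately have "sat H T tau lam k (Next (cint d d) (Until (cint 0 (n - d)) psi phi))"
      using k1 by (simp add: d_def)
    moreover have "sat H T tau lam k psi" using j kj by simp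
    ultimately show ?thesis using \<open>1 \<le> d\<close> \<open>d \<le> n\<close> by blast
  qed
next
  assume "sat H T tau lam k phi \<or> (sat H T tau lam k psi \<and> (\<exists>i. 1 \<le> i \<and> i \<le> n \<and>
      sat H T tau lam k (Next (cint i i) (Until (cint 0 (n - i)) psi phi))))"
  then show "sat H T tau lam k (Until (cint 0 n) psi phi)"
  proof
    assume "sat H T tau lam k phi" then show ?thesis using kl by (auto intro!: exI[of _ k])
  next
    assume "sat H T tau lam k psi \<and> (\<exists>i. 1 \<le> i \<and> i \<le> n \<and>
      sat H T tau lam k (Next (cint i i) (Until (cint 0 (n - i)) psi phi)))"
    then obtain i j where p: "sat H T tau lam k psi" "1 \<le> i" "i \<le> n" "tau (k+1) - tau k = i"
      "k + 1 \<le> j" "enat j < lam" "tau j - tau (k+1) \<le> n - i" "sat H T tau lam j phi"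
      "\<forall>l. k + 1 \<le> l \<and> l < j \<longrightarrow> sat H T tau lam l psi" by auto
    have "\<forall>l. k \<le> l \<and> l < j \<longrightarrow> sat H T tau lam l psi"
      using p by (metis Suc_eq_plus1 Suc_leI le_neq_implies_less)
    moreover have "tau (k+1) \<le> tau j" using mono_tau[OF st p(5) p(6)] .
    ultimately show ?thesis using p by (auto intro!: exI[of _ j])
  qed
qed


lemma release_eq:
  assumes st: "strict_trace H T tau lam" and kl: "enat k < lam"
  shows "sat H T tau lam k (Release (cint 0 n) psi phi) \<longleftrightarrow>
    sat H T tau lam k phi \<and> (sat H T tau lam k psi \<or> (\<forall>i. 1 \<le> i \<and> i \<le> n \<longrightarrow>
      sat H T tau lam k (WNext (cint i i) (Release (cint 0 (n - i)) psi phi))))"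
proof
  assume R: "sat H T tau lam k (Release (cint 0 n) psi phi)"
  then have "sat H T tau lam k phi" using kl by auto
  moreover have "sat H T tau lam k psi \<or> (\<forall>i. 1 \<le> i \<and> i \<le> n \<longrightarrow>
      sat H T tau lam k (WNext (cint i i) (Release (cint 0 (n - i)) psi phi)))"
  proof (cases "sat H T tau lam k psi")
    case False
    have "sat H T tau lam k (WNext (cint i i) (Release (cint 0 (n - i)) psi phi))"
      if "1 \<le> i" "i \<le> n" for i
    proof (unfold sat_WNext, intro impI)
      assume a: "enat (k + 1) < lam \<and> in_int (tau (k + 1) - tau k) (cint i i)"
      show "sat H T tau lam (k + 1) (Release (cint 0 (n - i)) psi phi)"
      proof (simp only: sat.simps, intro allI impI)
        fix j assume b: "k + 1 \<le> j \<and> enat j < lam \<and> in_int (tau j - tau (k + 1)) (cint 0 (n - i))"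
        have m1: "tau (k+1) \<le> tau j" using mono_tau[of H T tau lam "k+1" j] st b by blast
        have "tau j - tau k \<le> n" using a b m1 that by auto
        then have "sat H T tau lam j phi \<or> (\<exists>l. k \<le> l \<and> l < j \<and> sat H T tau lam l psi)"
          using R b by auto
        then show "sat H T tau lam j phi \<or> (\<exists>l. k + 1 \<le> l \<and> l < j \<and> sat H T tau lam l psi)"
          using False by (metis Suc_eq_plus1 Suc_leI le_neq_implies_less)
      qed
    qed
    then show ?thesis by blast
  qed simp
  ultimately show "sat H T tau lam k phi \<and> (sat H T tau lam k psi \<or> (\<forall>i. 1 \<le> i \<and> i \<le> n \<longrightarrow>
      sat H T tau lam k (WNext (cint i i) (Release (cint 0 (n - i)) psi phi))))" by blast
next
  assume A: "sat H T tau lam k phi \<and> (sat H T tau lam k psi \<or> (\<forall>i. 1 \<le> i \<and> i \<le> n \<longrightarrow>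
      sat H T tau lam k (WNext (cint i i) (Release (cint 0 (n - i)) psi phi))))"
  show "sat H T tau lam k (Release (cint 0 n) psi phi)"
  proof (simp only: sat.simps, intro allI impI)
    fix j assume b: "k \<le> j \<and> enat j < lam \<and> in_int (tau j - tau k) (cint 0 n)"
    show "sat H T tau lam j phi \<or> (\<exists>l. k \<le> l \<and> l < j \<and> sat H T tau lam l psi)"
    proof (cases "j = k")
      case True then show ?thesis using A by simp
    next
      case False
      show ?thesis
      proof (cases "sat H T tau lam k psi")
        case True then show ?thesis using False b by auto
      next
        case np: False
        hence kj: "k + 1 \<le> j" using b False by simp
        hence k1: "enat (k+1) < lam" using b by (meson enat_ord_simps(1) le_less_trans)
        have lt: "tau k < tau (k+1)" using st k1 by (simp add: strict_trace_def)
        have m1: "tau (k+1) \<le> tau j" using mono_tau[of H T tau lam "k+1" j] st b kj by blast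
        define d where "d = tau (k+1) - tau k"
        have "1 \<le> d" "d \<le> n" using lt m1 b by (auto simp: d_def)
        then have "sat H T tau lam k (WNext (cint d d) (Release (cint 0 (n - d)) psi phi))"
          using A np by blast
        then have "sat H T tau lam (k+1) (Release (cint 0 (n - d)) psi phi)"
          using k1 by (simp add: sat_WNext d_def)
        moreover have "in_int (tau j - tau (k + 1)) (cint 0 (n - d))" using b m1 lt by (auto simp: d_def)
        ultimately have "sat H T tau lam j phi \<or> (\<exists>l. k + 1 \<le> l \<and> l < j \<and> sat H T tau lam l psi)"
          using kj b by (simp only: sat.simps)
        then show ?thesis by auto
      qed
    qed
  qed
qed


lemma since_eq:
  assumes st: "strict_trace H T tau lam" and kl: "enat k < lam"
  shows "sat H T tau lam k (Since (cint 0 n) psi phi) \<longleftrightarrow>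
    sat H T tau lam k phi \<or> (sat H T tau lam k psi \<and> (\<exists>i. 1 \<le> i \<and> i \<le> n \<and>
      sat H T tau lam k (Prev (cint i i) (Since (cint 0 (n - i)) psi phi))))"
proof
  assume "sat H T tau lam k (Since (cint 0 n) psi phi)"
  then obtain j where j: "j \<le> k" "tau k - tau j \<le> n" "sat H T tau lam j phi"
    "\<forall>i. j < i \<and> i \<le> k \<longrightarrow> sat H T tau lam i psi" by auto
  show "sat H T tau lam k phi \<or> (sat H T tau lam k psi \<and> (\<exists>i. 1 \<le> i \<and> i \<le> n \<and>
      sat H T tau lam k (Prev (cint i i) (Since (cint 0 (n - i)) psi phi))))"
  proof (cases "j = k")
    case True then show ?thesis using j by simp
  next
    case False
    then obtain m where km: "k = Suc m" and jm: "j \<le> m" using j(1)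
      by (cases k) auto
    have k1: "enat (m+1) < lam" using kl km by simp
    have lt: "tau m < tau k" using st k1 km by (simp add: strict_trace_def)
    have ml: "enat m < lam" using k1 enat_ord_simps(2)[of m "m+1"] by (meson less_add_one order.strict_trans)
    have m1: "tau j \<le> tau m" using mono_tau[OF st jm ml] .
    define d where "d = tau k - tau m"
    have "sat H T tau lam m (Since (cint 0 (n - d)) psi phi)"
      using j jm lt m1 km by (auto simp: d_def intro!: exI[of _ j])
    moreover have "1 \<le> d" "d \<le> n" using lt m1 j(2) by (auto simp: d_def)
    ultimately have "sat H T tau lam k (Prev (cint d d) (Since (cint 0 (n - d)) psi phi))"
      using km by (simp add: d_def)
    moreover have "sat H T tau lam k psi" using j False by simp
    ultimately show ?thesis using \<open>1 \<le> d\<close> \<open>d \<le> n\<close> by blast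
  qed
next
  assume "sat H T tau lam k phi \<or> (sat H T tau lam k psi \<and> (\<exists>i. 1 \<le> i \<and> i \<le> n \<and>
      sat H T tau lam k (Prev (cint i i) (Since (cint 0 (n - i)) psi phi))))"
  then show "sat H T tau lam k (Since (cint 0 n) psi phi)"
  proof
    assume "sat H T tau lam k phi" then show ?thesis by (auto intro!: exI[of _ k])
  next
    assume "sat H T tau lam k psi \<and> (\<exists>i. 1 \<le> i \<and> i \<le> n \<and>
      sat H T tau lam k (Prev (cint i i) (Since (cint 0 (n - i)) psi phi)))"
    then obtain i where p0: "sat H T tau lam k psi" "1 \<le> i" "i \<le> n"
        "sat H T tau lam k (Prev (cint i i) (Since (cint 0 (n - i)) psi phi))" by blast
    then have p1: "k > 0" "tau k - tau (k-1) = i" "sat H T tau lam (k-1) (Since (cint 0 (n - i)) psi phi)"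
      by auto
    then obtain j where p2: "j \<le> k - 1" "tau (k-1) - tau j \<le> n - i" "sat H T tau lam j phi"
      "\<forall>l. j < l \<and> l \<le> k - 1 \<longrightarrow> sat H T tau lam l psi" by auto
    have p: "sat H T tau lam k psi" "1 \<le> i" "i \<le> n" "tau k - tau (k-1) = i"
      "k > 0" "j \<le> k - 1" "tau (k-1) - tau j \<le> n - i" "sat H T tau lam j phi"
      "\<forall>l. j < l \<and> l \<le> k - 1 \<longrightarrow> sat H T tau lam l psi" using p0 p1 p2 by auto
    have "\<forall>l. j < l \<and> l \<le> k \<longrightarrow> sat H T tau lam l psi"
    proof (intro allI impI)
      fix l assume "j < l \<and> l \<le> k"
      show "sat H T tau lam l psi"
      proof (cases "l = k")
        case True then show ?thesis using p(1) by simp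
      next
        case False then have "l \<le> k - 1" using \<open>j < l \<and> l \<le> k\<close> by linarith
        then show ?thesis using p(9) \<open>j < l \<and> l \<le> k\<close> by blast
      qed
    qed
    moreover have "tau j \<le> tau (k-1)" using mono_tau[OF st p(6)] kl
      by (meson diff_le_self enat_ord_simps(1) le_less_trans)
    moreover have "j \<le> k" using p(6) by linarith
    moreover have "tau k - tau j \<le> n" using p(2,3,4,7) \<open>tau j \<le> tau (k-1)\<close> by arith
    ultimately show ?thesis using p(8) by (simp only: sat.simps in_cint) blast
  qed
qed

lemma trigger_eq:
  assumes st: "strict_trace H T tau lam" and kl: "enat k < lam"
  shows "sat H T tau lam k (Trigger (cint 0 n) psi phi) \<longleftrightarrow>
    sat H T tau lam k phi \<and> (sat H T tau lam k psi \<or> (\<forall>i. 1 \<le> i \<and> i \<le> n \<longrightarrow>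
      sat H T tau lam k (WPrev (cint i i) (Trigger (cint 0 (n - i)) psi phi))))"
proof
  assume R: "sat H T tau lam k (Trigger (cint 0 n) psi phi)"
  then have "sat H T tau lam k phi" by auto
  moreover have "sat H T tau lam k psi \<or> (\<forall>i. 1 \<le> i \<and> i \<le> n \<longrightarrow>
      sat H T tau lam k (WPrev (cint i i) (Trigger (cint 0 (n - i)) psi phi)))"
  proof (cases "sat H T tau lam k psi")
    case False
    have "sat H T tau lam k (WPrev (cint i i) (Trigger (cint 0 (n - i)) psi phi))"
      if "1 \<le> i" "i \<le> n" for i
    proof (unfold sat_WPrev, intro impI)
      assume a: "k > 0 \<and> in_int (tau k - tau (k - 1)) (cint i i)"
      show "sat H T tau lam (k - 1) (Trigger (cint 0 (n - i)) psi phi)"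
      proof (simp only: sat.simps, intro allI impI)
        fix j assume b1: "j \<le> k - 1" and b2: "in_int (tau (k - 1) - tau j) (cint 0 (n - i))"
        have b: "j \<le> k - 1 \<and> in_int (tau (k - 1) - tau j) (cint 0 (n - i))" using b1 b2 by simp
        have "tau j \<le> tau (k-1)" using mono_tau[of H T tau lam j "k-1"] st b kl
          by (meson diff_le_self enat_ord_simps(1) le_less_trans)
        have "tau (k-1) < tau k" using st kl a by (cases k) (auto simp: strict_trace_def)
        have "tau k - tau j \<le> n" using a b \<open>tau j \<le> tau (k-1)\<close> \<open>tau (k-1) < tau k\<close> that
          by (simp only: in_cint) linarith
        moreover have "j \<le> k" using b by (meson diff_le_self le_trans)
        ultimately show "sat H T tau lam j phi \<or> (\<exists>l. j < l \<and> l \<le> k - 1 \<and> sat H T tau lam l psi)"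
        proof -
          have "sat H T tau lam j phi \<or> (\<exists>l. j < l \<and> l \<le> k \<and> sat H T tau lam l psi)"
            using R \<open>j \<le> k\<close> \<open>tau k - tau j \<le> n\<close> by (simp only: sat.simps in_cint) blast
          moreover have "l \<le> k - 1" if "l \<le> k" "sat H T tau lam l psi" for l
            using that False by (cases "l = k") auto
          ultimately show ?thesis by blast
        qed
      qed
    qed
    then show ?thesis by blast
  qed simp
  ultimately show "sat H T tau lam k phi \<and> (sat H T tau lam k psi \<or> (\<forall>i. 1 \<le> i \<and> i \<le> n \<longrightarrow>
      sat H T tau lam k (WPrev (cint i i) (Trigger (cint 0 (n - i)) psi phi))))" by blast
next
  assume A: "sat H T tau lam k phi \<and> (sat H T tau lam k psi \<or> (\<forall>i. 1 \<le> i \<and> i \<le> n \<longrightarrow>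
      sat H T tau lam k (WPrev (cint i i) (Trigger (cint 0 (n - i)) psi phi))))"
  show "sat H T tau lam k (Trigger (cint 0 n) psi phi)"
  proof (simp only: sat.simps, intro allI impI)
    fix j assume b1: "j \<le> k" and b2: "in_int (tau k - tau j) (cint 0 n)"
    have b: "j \<le> k \<and> in_int (tau k - tau j) (cint 0 n)" using b1 b2 by simp
    show "sat H T tau lam j phi \<or> (\<exists>l. j < l \<and> l \<le> k \<and> sat H T tau lam l psi)"
    proof (cases "j = k")
      case True then show ?thesis using A by simp
    next
      case False
      show ?thesis
      proof (cases "sat H T tau lam k psi")
        case True then show ?thesis using False b by auto
      next
        case np: False
        then obtain m where km: "k = Suc m" and jm: "j \<le> m" using b False
          by (cases k) auto
        have k1: "enat (m+1) < lam" using kl km by simp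
        have lt: "tau m < tau k" using st k1 km by (simp add: strict_trace_def)
        have ml: "enat m < lam" using k1 enat_ord_simps(2)[of m "m+1"] by (meson less_add_one order.strict_trans)
        have m1: "tau j \<le> tau m" using mono_tau[OF st jm ml] .
        define d where "d = tau k - tau m"
        have "1 \<le> d" "d \<le> n" using lt m1 b by (auto simp: d_def)
        then have "sat H T tau lam k (WPrev (cint d d) (Trigger (cint 0 (n - d)) psi phi))"
          using A np by blast
        then have "sat H T tau lam m (Trigger (cint 0 (n - d)) psi phi)"
          using km by (simp add: sat_WPrev d_def)
        moreover have "in_int (tau m - tau j) (cint 0 (n - d))" using b m1 lt by (auto simp: d_def)
        ultimately have "sat H T tau lam j phi \<or> (\<exists>l. j < l \<and> l \<le> m \<and> sat H T tau lam l psi)"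
          using jm by (simp only: sat.simps)
        then show ?thesis using km by auto
      qed
    qed
  qed
qed

theorem lemma3:
  fixes psi phi :: "'a mformula" and n :: nat
  assumes "n > 0"
  shows
   "equiv_strict (Until (cint 0 n) psi phi)
      (Or phi (And psi (BigOr (map (\<lambda>i. Next (cint i i) (Until (cint 0 (n - i)) psi phi)) [1..<n+1]))))
    \<and> equiv_strict (Release (cint 0 n) psi phi)
      (And phi (Or psi (BigAnd (map (\<lambda>i. WNext (cint i i) (Release (cint 0 (n - i)) psi phi)) [1..<n+1]))))
    \<and> equiv_strict (Since (cint 0 n) psi phi)
      (Or phi (And psi (BigOr (map (\<lambda>i. Prev (cint i i) (Since (cint 0 (n - i)) psi phi)) [1..<n+1]))))
    \<and> equiv_strict (Trigger (cint 0 n) psi phi)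
      (And phi (Or psi (BigAnd (map (\<lambda>i. WPrev (cint i i) (Trigger (cint 0 (n - i)) psi phi)) [1..<n+1]))))"
  unfolding equiv_strict_def sat.simps(3,4) sat_BigOr sat_BigAnd setmap setmap2
  by (intro conjI allI impI; (rule until_eq release_eq since_eq trigger_eq; assumption))

end
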